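(* Let $t\ge1$, $F=\mathbb{F}_{2^t}$, $A\subseteq F$ and $\alpha^*\in A$. Let $z_1,\dots,z_t\in F$ be such that $\beta_i:=\alpha^*-z_i$, $i=1,\dots,t$, form a basis of $F$ over $\mathbb{F}_2$, and let $g_i(x)=\beta_i(x-z_i)$. Then for every $\alpha\in A\setminus\{\alpha^*\}$, $\mathrm{rank}_{\mathbb{F}_2}\{g_1(\alpha),\dots,g_t(\alpha)\}\le t-1$. *)

theory Defs
  imports Main
begin

text \<open>A field of characteristic 2 is a vector space over F_2; an F_2-linear
combination of a family is a sum of a subfamily (coefficients in {0,1}).\<close>

definition f2_comb :: "(nat \<Rightarrow> 'a::field) \<Rightarrow> nat \<Rightarrow> (nat \<Rightarrow> bool) \<Rightarrow> 'a" where
  "f2_comb b t c = (\<Sum>i\<in>{1..t}. if c i then b i else 0)"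

definition f2_basis :: "(nat \<Rightarrow> 'a::field) \<Rightarrow> nat \<Rightarrow> bool" where
  "f2_basis b t \<longleftrightarrow>
     (\<forall>c. f2_comb b t c = 0 \<longrightarrow> (\<forall>i\<in>{1..t}. \<not> c i)) \<and>
     (\<forall>x. \<exists>c. x = f2_comb b t c)"

definition f2_indep :: "'a::field set \<Rightarrow> bool" where
  "f2_indep T \<longleftrightarrow> finite T \<and> (\<forall>U\<subseteq>T. U \<noteq> {} \<longrightarrow> \<Sum>U \<noteq> 0)"

definition f2_rank :: "'a::field set \<Rightarrow> nat" where
  "f2_rank S = Max {card T | T. T \<subseteq> S \<and> f2_indep T}"

end

theory Submission
  imports Defs
begin

lemma char2_neg:
  fixes x :: "'a::field"
  assumes "(1::'a) + 1 = 0"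
  shows "x + x = 0"
proof -
  have "x + x = (1 + 1) * x" by (simp add: algebra_simps)
  thus ?thesis using assms by simp
qed

lemma char2_minus:
  fixes x y :: "'a::field"
  assumes "(1::'a) + 1 = 0"
  shows "x - y = x + y"
proof -
  have "y + y = 0" using char2_neg[OF assms] .
  hence "- y = y" by (metis add_eq_0_iff)
  thus ?thesis by (metis diff_conv_add_uminus)
qed

lemma sum_in_closed:
  fixes S :: "'a::comm_monoid_add set"
  assumes "0 \<in> S" "\<And>a b. a \<in> S \<Longrightarrow> b \<in> S \<Longrightarrow> a + b \<in> S" "finite U" "U \<subseteq> S"
  shows "\<Sum>U \<in> S"
  using assms(3,4)
proof (induction U rule: finite_induct)
  case empty then show ?case using assms(1) by simp
next
  case (insert x F) then show ?case using assms(2) by simp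
qed

lemma indep_card_bound:
  fixes T S :: "'a::{field,finite} set"
  assumes c2: "(1::'a) + 1 = 0"
    and ind: "f2_indep T" and TS: "T \<subseteq> S"
    and z: "0 \<in> S" and cl: "\<And>a b. a \<in> S \<Longrightarrow> b \<in> S \<Longrightarrow> a + b \<in> S"
  shows "2 ^ card T \<le> card S"
proof -
  have fT: "finite T" using ind unfolding f2_indep_def by simp
  have inj: "inj_on Sum (Pow T)"
  proof (rule inj_onI)
    fix U V assume U: "U \<in> Pow T" and V: "V \<in> Pow T" and e: "\<Sum>U = \<Sum>V"
    have fU: "finite U" "finite V" using U V fT finite_subset by auto
    have "\<Sum>U = \<Sum>((U - V) \<union> (U \<inter> V))" by (simp add: Un_Diff_Int)
    also have "\<dots> = \<Sum>(U - V) + \<Sum>(U \<inter> V)"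
      by (rule sum.union_disjoint) (use fU in auto)
    finally have s1: "\<Sum>U = \<Sum>(U - V) + \<Sum>(U \<inter> V)" .
    have "\<Sum>V = \<Sum>((V - U) \<union> (V \<inter> U))" by (simp add: Un_Diff_Int)
    also have "\<dots> = \<Sum>(V - U) + \<Sum>(V \<inter> U)"
      by (rule sum.union_disjoint) (use fU in auto)
    finally have s2: "\<Sum>V = \<Sum>(V - U) + \<Sum>(U \<inter> V)" by (simp add: Int_commute)
    have "\<Sum>(U - V) + \<Sum>(U \<inter> V) = \<Sum>(V - U) + \<Sum>(U \<inter> V)"
      using e unfolding s1 s2 .
    hence e2: "\<Sum>(U - V) = \<Sum>(V - U)" by (rule add_right_imp_eq)
    have "\<Sum>((U - V) \<union> (V - U)) = \<Sum>(U - V) + \<Sum>(V - U)"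
      using fU by (intro sum.union_disjoint) auto
    also have "\<dots> = 0" using e2 char2_neg[OF c2] by simp
    finally have z: "\<Sum>((U - V) \<union> (V - U)) = 0" .
    have sb: "(U - V) \<union> (V - U) \<subseteq> T" using U V by auto
    have ii: "\<forall>W\<subseteq>T. W \<noteq> {} \<longrightarrow> \<Sum>W \<noteq> 0" using ind unfolding f2_indep_def by (rule conjunct2)
    have "(U - V) \<union> (V - U) = {}"
    proof (rule ccontr)
      assume "(U - V) \<union> (V - U) \<noteq> {}"
      hence "\<Sum>((U - V) \<union> (V - U)) \<noteq> 0" using ii sb by simp
      thus False using z by contradiction
    qed
    thus "U = V" by blast
  qed
  have sub: "Sum ` Pow T \<subseteq> S"
  proof
    fix y assume "y \<in> Sum ` Pow T"
    then obtain U where U: "U \<subseteq> T" "y = \<Sum>U" by auto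
    have fU: "finite U" using U(1) fT by (rule finite_subset)
    have sU: "U \<subseteq> S" using U(1) TS by (rule order_trans)
    have "\<Sum>U \<in> S" by (rule sum_in_closed[where S=S and U=U]) (use z cl fU sU in auto)
    thus "y \<in> S" using U(2) by simp
  qed
  have "2 ^ card T = card (Pow T)" using fT by (simp add: card_Pow)
  also have "\<dots> = card (Sum ` Pow T)" using inj by (simp add: card_image)
  also have "\<dots> \<le> card S" using sub by (simp add: card_mono)
  finally show ?thesis .
qed

theorem lemma3:
  fixes t :: nat and A :: "'a::{field,finite} set" and \<alpha>s :: 'a and z :: "nat \<Rightarrow> 'a"
  assumes "t \<ge> 1"
    and "(1::'a) + 1 = 0"
    and "card (UNIV :: 'a set) = 2 ^ t"
    and "\<alpha>s \<in> A"
    and "f2_basis (\<lambda>i. \<alpha>s - z i) t"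
  shows "\<forall>\<alpha>\<in>A - {\<alpha>s}.
           f2_rank ((\<lambda>i. (\<alpha>s - z i) * (\<alpha> - z i)) ` {1..t}) \<le> t - 1"
proof
  fix \<alpha> assume a: "\<alpha> \<in> A - {\<alpha>s}"
  note c2 = assms(2)
  define d where "d = \<alpha> - \<alpha>s"
  have d0: "d \<noteq> 0" using a d_def by auto
  define L where "L x = x * x + x * d" for x
  have Ladd: "L (x + y) = L x + L y" for x y
  proof -
    have "L (x + y) = L x + L y + (x * y + x * y)" unfolding L_def by (simp add: algebra_simps)
    thus ?thesis using char2_neg[OF c2, of "x*y"] by simp
  qed
  define S where "S = range L"
  have g: "(\<alpha>s - z i) * (\<alpha> - z i) = L (\<alpha>s - z i)" for i
    unfolding L_def d_def by (simp add: algebra_simps)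
  have fib: "L -` {L x} = {x, x + d}" for x
  proof
    show "{x, x + d} \<subseteq> L -` {L x}"
    proof -
      have "L (x + d) = L x + L d" by (rule Ladd)
      moreover have "L d = 0" unfolding L_def using char2_neg[OF c2, of "d*d"] by simp
      ultimately show ?thesis by simp
    qed
    show "L -` {L x} \<subseteq> {x, x + d}"
    proof
      fix w assume "w \<in> L -` {L x}"
      hence "L w = L x" by simp
      hence "L (w + x) = 0" using Ladd char2_neg[OF c2] by simp
      hence "(w + x) * (w + x + d) = 0" unfolding L_def by (simp add: algebra_simps)
      hence dj: "w + x = 0 \<or> w + x + d = 0" by simp
      have h1: "w = (w + x) + x" using char2_neg[OF c2, of x] by (simp add: add.assoc)
      have h2: "x + d = (w + x + d) + w" using char2_neg[OF c2, of w]
        by (simp add: algebra_simps)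
      have "w = x \<or> w = x + d"
      proof (cases "w + x = 0")
        case True then show ?thesis using h1 by simp
      next
        case False then have "w + x + d = 0" using dj by simp
        then show ?thesis using h2 by simp
      qed
      thus "w \<in> {x, x + d}" by simp
    qed
  qed
  have cardS: "2 * card S \<le> 2 ^ t"
  proof -
    have U: "UNIV = (\<Union>y\<in>S. L -` {y})" unfolding S_def by auto
    have "card (UNIV :: 'a set) = (\<Sum>y\<in>S. card (L -` {y}))"
      unfolding U by (rule card_UN_disjoint) auto
    also have "\<dots> = (\<Sum>y\<in>S. 2)"
    proof (rule sum.cong)
      fix y assume "y \<in> S"
      then obtain x where "y = L x" unfolding S_def by auto
      moreover have "x \<noteq> x + d" using d0 by simp
      ultimately show "card (L -` {y}) = 2" using fib by simp
    qed simp
    finally show ?thesis using assms(3) by simp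
  qed
  have Sle: "card S \<le> 2 ^ (t - 1)"
  proof -
    obtain k where k: "t = Suc k" using assms(1) by (cases t) auto
    have "2 ^ t = 2 * (2::nat) ^ (t - 1)" unfolding k by simp
    thus ?thesis using cardS by simp
  qed
  let ?G = "(\<lambda>i. (\<alpha>s - z i) * (\<alpha> - z i)) ` {1..t}"
  have GS: "?G \<subseteq> S" unfolding S_def using g by auto
  have L0: "L 0 = 0" unfolding L_def by simp
  have z0: "0 \<in> S" unfolding S_def using L0[symmetric] by (rule range_eqI)
  have clS: "a + b \<in> S" if ab: "a \<in> S" "b \<in> S" for a b
  proof -
    obtain x y where "a = L x" "b = L y" using ab unfolding S_def by auto
    hence "a + b = L (x + y)" using Ladd by simp
    thus ?thesis unfolding S_def by (rule range_eqI)
  qed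
  have bound: "card T \<le> t - 1" if "T \<subseteq> ?G" "f2_indep T" for T
  proof -
    have TS: "T \<subseteq> S" using that(1) GS by (rule order_trans)
    have "2 ^ card T \<le> card S" by (rule indep_card_bound[OF c2 that(2) TS z0 clS])
    hence "2 ^ card T \<le> (2::nat) ^ (t - 1)" using Sle by (rule order_trans)
    thus ?thesis by simp
  qed
  have fin: "finite {card T | T. T \<subseteq> ?G \<and> f2_indep T}" by simp
  have ne: "{card T | T. T \<subseteq> ?G \<and> f2_indep T} \<noteq> {}"
  proof -
    have "f2_indep ({}::'a set)" by (simp add: f2_indep_def)
    hence "card ({}::'a set) \<in> {card T | T. T \<subseteq> ?G \<and> f2_indep T}" by blast
    thus ?thesis by blast
  qed
  show "f2_rank ?G \<le> t - 1" unfolding f2_rank_def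
    using fin ne bound by (subst Max_le_iff) auto
qed

end
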